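(* Let $f$ be a multiplicative function with $f(n)=o(n^\delta)$ for some $\delta>0$, and let $\sigma>\delta$. Then for all but finitely many primes $p$, the series $\sum_{n=0}^\infty\frac{|D_f(n,p)|}{p^{n\sigma}}$ is convergent, and these sums are bounded uniformly in $p$.
   Context: For a prime $p$ and integer $k\ge1$, $D_f(k,p)$ is the determinant of the $k\times k$ matrix $(a_{ij})$ with $a_{ij}=f(p^{i-j+1})$ if $i-j+1\ge0$ and $a_{ij}=0$ otherwise; $D_f(0,p)=1$. *)

theory Defs
  imports Complex_Main "HOL-Library.Landau_Symbols" "HOL-Computational_Algebra.Primes"
    "Jordan_Normal_Form.Determinant"
begin

definition multiplicative_fun :: "(nat \<Rightarrow> complex) \<Rightarrow> bool" where
  "multiplicative_fun f \<longleftrightarrow> f 1 = 1 \<and>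
     (\<forall>m n. m > 0 \<longrightarrow> n > 0 \<longrightarrow> coprime m n \<longrightarrow> f (m * n) = f m * f n)"

definition D_mat :: "(nat \<Rightarrow> complex) \<Rightarrow> nat \<Rightarrow> nat \<Rightarrow> complex mat" where
  "D_mat f k p = mat k k (\<lambda>(i, j). if int i - int j + 1 \<ge> 0
                                     then f (p ^ nat (int i - int j + 1)) else 0)"

definition D :: "(nat \<Rightarrow> complex) \<Rightarrow> nat \<Rightarrow> nat \<Rightarrow> complex" where
  "D f k p = det (D_mat f k p)"

lemma D_0: "D f 0 p = 1"
  unfolding D_def D_mat_def by (simp add: det_def)

end

theory Submission imports Defs begin
lemma minor_det:
  assumes j: "j \<le> n" and f1: "f 1 = 1"
  shows "det (mat_delete (D_mat f (Suc n) p) n j) = D f j p"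
proof -
  define M where "M = mat_delete (D_mat f (Suc n) p) n j"
  have entry: "\<And>r c. r < n \<Longrightarrow> c < n \<Longrightarrow> M $$ (r,c) =
     (let c' = (if c < j then c else Suc c) in if int r - int c' + 1 \<ge> 0 then f (p ^ nat (int r - int c' + 1)) else 0)"
    by (simp add: M_def mat_delete_def D_mat_def Let_def)
  have dims: "dim_row M = j + (n-j)" "dim_col M = j + (n-j)" using j by (auto simp: M_def D_mat_def)
  define A1 where "A1 = mat j j (\<lambda> ij. M $$ ij)"
  define A2 where "A2 = mat j (n-j) (\<lambda> (i,k). M $$ (i,k+j))"
  define A3 where "A3 = mat (n-j) j (\<lambda> (i,k). M $$ (i+j,k))"
  define A4 where "A4 = mat (n-j) (n-j) (\<lambda> (i,k). M $$ (i+j,k+j))"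
  have sb: "split_block M j j = (A1,A2,A3,A4)"
    unfolding split_block_def Let_def A1_def A2_def A3_def A4_def using dims by simp
  note S = split_block[OF sb dims]
  have A1: "A1 = D_mat f j p"
    using j unfolding A1_def
    by (auto simp: D_mat_def entry intro!: eq_matI)
  have A2: "A2 = 0\<^sub>m j (n-j)"
    using j unfolding A2_def
    by (auto simp: entry intro!: eq_matI)
  have "det A4 = prod_list (diag_mat A4)"
    by (rule det_lower_triangular[OF _ S(4)])
      (use j in \<open>auto simp: A4_def entry\<close>)
  also have "\<dots> = 1"
    unfolding prod_list_diag_prod
    using j f1 by (auto simp: A4_def entry intro!: prod.neutral)
  finally have "det A4 = 1" .
  have "det M = det A1 * det A4"
    using S(5) det_four_block_mat_upper_right_zero[OF S(1) A2 S(3) S(4)] by simp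
  then show ?thesis using A1 \<open>det A4 = 1\<close> by (simp add: D_def M_def)
qed

lemma D_rec:
  assumes f1: "f 1 = 1"
  shows "D f (Suc n) p = (\<Sum>j<Suc n. f (p ^ (Suc n - j)) * ((-1)^(n+j) * D f j p))"
proof -
  have C: "D_mat f (Suc n) p \<in> carrier_mat (Suc n) (Suc n)" by (simp add: D_mat_def)
  have "D f (Suc n) p = (\<Sum>j<Suc n. D_mat f (Suc n) p $$ (n,j) * cofactor (D_mat f (Suc n) p) n j)"
    unfolding D_def by (rule laplace_expansion_row[OF C]) simp
  also have "\<dots> = (\<Sum>j<Suc n. f (p ^ (Suc n - j)) * ((-1)^(n+j) * D f j p))"
  proof (rule sum.cong[OF refl])
    fix j assume "j \<in> {..<Suc n}"
    hence j: "j \<le> n" by simp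
    have "nat (int n - int j + 1) = Suc n - j" using j by simp
    then show "D_mat f (Suc n) p $$ (n,j) * cofactor (D_mat f (Suc n) p) n j = f (p ^ (Suc n - j)) * ((-1)^(n+j) * D f j p)"
      using j minor_det[of j n f p, OF j f1] by (simp add: D_mat_def cofactor_def)
  qed
  finally show ?thesis .
qed
lemma D_bound:
  assumes f1: "f 1 = 1" and x: "x \<ge> 0" and fb: "\<And>m. m \<ge> 1 \<Longrightarrow> norm (f (p^m)) \<le> x^m"
  shows "norm (D f k p) \<le> (2*x)^k"
proof (induction k rule: less_induct)
  case (less k)
  show ?case
  proof (cases k)
    case 0 then show ?thesis by (simp add: D_0)
  next
    case (Suc n)
    have "norm (D f k p) \<le> (\<Sum>j<Suc n. norm (f (p ^ (Suc n - j)) * ((-1)^(n+j) * D f j p)))"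
      unfolding Suc D_rec[of f n p, OF f1] by (rule norm_sum)
    also have "\<dots> \<le> (\<Sum>j<Suc n. x^(Suc n - j) * (2*x)^j)"
    proof (rule sum_mono)
      fix j assume "j \<in> {..<Suc n}"
      hence j: "j < k" using Suc by simp
      have "norm (f (p ^ (Suc n - j)) * ((-1)^(n+j) * D f j p)) = norm (f (p ^ (Suc n - j))) * norm (D f j p)"
        by (simp add: norm_mult norm_power)
      also have "\<dots> \<le> x^(Suc n - j) * (2*x)^j"
        using j Suc by (intro mult_mono fb less.IH) (auto simp: x)
      finally show "norm (f (p ^ (Suc n - j)) * ((-1)^(n+j) * D f j p)) \<le> x^(Suc n - j) * (2*x)^j" .
    qed
    also have "\<dots> = (\<Sum>j<Suc n. x^(Suc n) * 2^j)"
    proof (rule sum.cong[OF refl])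
      fix j assume "j \<in> {..<Suc n}"
      hence "Suc n = (Suc n - j) + j" by simp
      hence "x^(Suc n) = x^(Suc n - j) * x^j" by (metis power_add)
      then show "x^(Suc n - j) * (2*x)^j = x^(Suc n) * 2^j" by (simp add: power_mult_distrib)
    qed
    also have "\<dots> = x^(Suc n) * (2^(Suc n) - 1)"
      by (simp add: sum_distrib_left[symmetric] sum_gp_strict)
    also have "\<dots> \<le> (2*x)^k" using x Suc by (simp add: power_mult_distrib algebra_simps)
    finally show ?thesis .
  qed
qed

theorem lemma5:
  fixes f :: "nat \<Rightarrow> complex" and \<delta> \<sigma> :: real
  assumes "multiplicative_fun f"
    and "\<delta> > 0"
    and "(\<lambda>n. norm (f n)) \<in> o(\<lambda>n. real n powr \<delta>)"
    and "\<sigma> > \<delta>"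
  shows "\<exists>S :: nat set. finite S \<and> (\<exists>B :: real. \<forall>p. prime p \<and> p \<notin> S \<longrightarrow>
           summable (\<lambda>n. norm (D f n p) / real p powr (real n * \<sigma>)) \<and>
           (\<Sum>n. norm (D f n p) / real p powr (real n * \<sigma>)) \<le> B)"
proof -
  have f1: "f 1 = 1" using assms(1) by (simp add: multiplicative_fun_def)
  have "eventually (\<lambda>n. norm (norm (f n)) \<le> 1 * norm (real n powr \<delta>)) at_top"
    by (rule landau_o.smallD[OF assms(3)]) simp
  then obtain N where N: "\<And>n. n \<ge> N \<Longrightarrow> norm (f n) \<le> real n powr \<delta>"
    by (auto simp: eventually_at_top_linorder)
  define P0 where "P0 = max (max N 2) (nat \<lceil>4 powr (1/(\<sigma>-\<delta>))\<rceil>)"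
  have "\<forall>p. prime p \<and> p \<notin> {..<P0} \<longrightarrow>
           summable (\<lambda>n. norm (D f n p) / real p powr (real n * \<sigma>)) \<and>
           (\<Sum>n. norm (D f n p) / real p powr (real n * \<sigma>)) \<le> 2"
  proof (intro allI impI)
    fix p assume p: "prime p \<and> p \<notin> {..<P0}"
    hence pP: "p \<ge> P0" by simp
    have p2: "p \<ge> 2" "p \<ge> N" using pP by (auto simp: P0_def)
    have pp: "real p > 0" using p2 by simp
    define x where "x = real p powr \<delta>"
    have x0: "x \<ge> 0" by (simp add: x_def)
    have fb: "norm (f (p^m)) \<le> x^m" if m: "m \<ge> 1" for m
    proof -
      have "p^m \<ge> p" using m p2 by (simp add: self_le_power)
      hence "norm (f (p^m)) \<le> real (p^m) powr \<delta>" using N[of "p^m"] p2 by linarith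
      also have "real (p^m) powr \<delta> = x^m"
        using pp by (simp add: x_def powr_power powr_realpow[symmetric] powr_powr mult.commute)
      finally show ?thesis .
    qed
    have Db: "norm (D f n p) \<le> (2*x)^n" for n by (rule D_bound[OF f1 x0 fb])
    define q where "q = 2 * real p powr (\<delta> - \<sigma>)"
    have "real p \<ge> 4 powr (1/(\<sigma>-\<delta>))" using pP unfolding P0_def by linarith
    hence "real p powr (\<sigma>-\<delta>) \<ge> (4 powr (1/(\<sigma>-\<delta>))) powr (\<sigma>-\<delta>)"
      using assms(4) by (intro powr_mono2) auto
    hence ge4: "real p powr (\<sigma>-\<delta>) \<ge> 4" using assms(4) by (simp add: powr_powr)
    have "real p powr (\<delta> - \<sigma>) = inverse (real p powr (\<sigma>-\<delta>))"
      by (simp add: powr_minus[symmetric])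
    moreover have "1 / real p powr (\<sigma>-\<delta>) \<le> 1/4" using ge4 by (simp add: divide_simps)
    ultimately have q: "q \<le> 1/2" "q \<ge> 0" unfolding q_def by (auto simp: inverse_eq_divide)
    have tb: "norm (norm (D f n p) / real p powr (real n * \<sigma>)) \<le> q^n" for n
    proof -
      have "real p powr (real n * \<sigma>) = (real p powr \<sigma>)^n" using pp by (simp add: powr_power mult.commute)
      moreover have "q = 2 * x / real p powr \<sigma>" unfolding q_def x_def by (simp add: powr_diff)
      ultimately have "q^n = (2*x)^n / real p powr (real n * \<sigma>)" by (simp add: power_divide)
      moreover have "real p powr (real n * \<sigma>) > 0" using pp by simp
      ultimately show ?thesis using Db[of n] by (simp add: divide_right_mono)
    qed
    have sq: "summable (\<lambda>n. q^n)" using q by (intro summable_geometric) simp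
    have sm: "summable (\<lambda>n. norm (D f n p) / real p powr (real n * \<sigma>))"
      by (rule summable_comparison_test[OF _ sq]) (use tb in auto)
    have "(\<Sum>n. norm (D f n p) / real p powr (real n * \<sigma>)) \<le> (\<Sum>n. q^n)"
      by (rule suminf_le[OF _ sm sq]) (use tb in auto)
    also have "\<dots> = 1 / (1 - q)" using q by (intro suminf_geometric) simp
    also have "\<dots> \<le> 2" using q by (simp add: field_simps)
    finally show "summable (\<lambda>n. norm (D f n p) / real p powr (real n * \<sigma>)) \<and>
           (\<Sum>n. norm (D f n p) / real p powr (real n * \<sigma>)) \<le> 2" using sm by simp
  qed
  then show ?thesis by blast
qed
end
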